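(* Let $f(u)=\sum_{j=0}^d a_ju^j$ be a real polynomial of degree $d\ge 2$ that is convex on $(0,\infty)$, strictly convex at $1$, and satisfies $f(1)=0$ and $f'(1)=0$. Then for any two probability densities $p,q$ (w.r.t. a common $\sigma$-finite measure $\mu$) for which the power chi pseudo-distances $\chi_i^\pm(p:q)$, $2\le i\le d$, are finite, the $f$-divergence has the finite chi expansion $$ I_f(p:q)=\sum_{i=2}^d\Big(\sum_{j=i}^d a_j\binom{j}{i}\Big)\chi_i^\pm(p:q). $$ Moreover, when $p=f(x;\theta_p)$ and $q=f(x;\theta_q)$ are members of the same affine exponential family with log-normalizer $F$, these quantities are finite and $I_f(p:q)$ is given in closed form by $$ I_f(p:q)=\sum_{i=2}^d\Big(\sum_{j=i}^d a_j\binom{j}{i}\Big)\sum_{s=0}^i(-1)^{i-s}\binom{i}{s}\exp\Big(F\big((1-s)\theta_p+s\theta_q\big)-\big((1-s)F(\theta_p)+sF(\theta_q)\big)\Big). $$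
   Context: For a convex $f:(0,\infty)\to\mathbb{R}$, the $f$-divergence between densities $p,q$ w.r.t. $\mu$ is $I_f(p:q)=\int p(x)f\big(\frac{q(x)}{p(x)}\big)\,d\mu(x)$ (with the usual conventions $0f(0/0)=0$ etc.). For integer $i\ge2$, the $i$-th power chi pseudo-distance is $\chi_i^\pm(p:q)=\int\frac{(q(x)-p(x))^i}{p(x)^{i-1}}\,d\mu(x)$. An exponential family consists of densities $f(x;\theta)=\exp(t(x)^\top\theta-F(\theta)+k(x))1_{\mathcal{X}}(x)$ with natural parameter space $\Theta=\{\theta:\int\exp(t(x)^\top\theta+k(x))d\mu<\infty\}$ and log-normalizer $F(\theta)=\log\int\exp(t(x)^\top\theta+k(x))d\mu$; it is an affine exponential family when $\Theta$ is affine (closed under affine combinations, e.g. $\Theta=\mathbb{R}^D$). *)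

theory Defs
  imports "HOL-Analysis.Analysis" "HOL-Probability.Probability"
begin

definition is_density :: "'a measure \<Rightarrow> ('a \<Rightarrow> real) \<Rightarrow> bool" where
  "is_density M p \<longleftrightarrow> p \<in> borel_measurable M \<and> (\<forall>x\<in>space M. 0 \<le> p x)
     \<and> (\<integral>\<^sup>+ x. ennreal (p x) \<partial>M) = 1"

definition chi_integrand :: "nat \<Rightarrow> ('a \<Rightarrow> real) \<Rightarrow> ('a \<Rightarrow> real) \<Rightarrow> 'a \<Rightarrow> real" where
  "chi_integrand i p q x = (if p x > 0 then (q x - p x) ^ i / p x ^ (i - 1) else 0)"

text \<open>Finiteness of chi_i(p:q): with the usual conventions the integrand is +infinity where
  p = 0 < q, so finiteness means q = 0 a.e. on {p = 0} and the integrand is integrable.\<close>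
definition chi_finite :: "'a measure \<Rightarrow> nat \<Rightarrow> ('a \<Rightarrow> real) \<Rightarrow> ('a \<Rightarrow> real) \<Rightarrow> bool" where
  "chi_finite M i p q \<longleftrightarrow> (AE x in M. p x = 0 \<longrightarrow> q x = 0) \<and> integrable M (chi_integrand i p q)"

definition chi_pm :: "'a measure \<Rightarrow> nat \<Rightarrow> ('a \<Rightarrow> real) \<Rightarrow> ('a \<Rightarrow> real) \<Rightarrow> real" where
  "chi_pm M i p q = (\<integral>x. chi_integrand i p q x \<partial>M)"

text \<open>Integrand of the f-divergence I_f(p:q) = \<integral> p f(q/p) dmu, with 0 f(0/0) = 0.
  (Points with p = 0 < q are excluded by hypothesis -- they form a null set.)\<close>
definition fdiv_integrand :: "(real \<Rightarrow> real) \<Rightarrow> ('a \<Rightarrow> real) \<Rightarrow> ('a \<Rightarrow> real) \<Rightarrow> 'a \<Rightarrow> real" where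
  "fdiv_integrand f p q x = (if p x > 0 then p x * f (q x / p x) else 0)"

definition fdiv :: "'a measure \<Rightarrow> (real \<Rightarrow> real) \<Rightarrow> ('a \<Rightarrow> real) \<Rightarrow> ('a \<Rightarrow> real) \<Rightarrow> real" where
  "fdiv M f p q = (\<integral>x. fdiv_integrand f p q x \<partial>M)"

text \<open>Exponential families: sufficient statistic t, carrier term k, support X.\<close>
definition natparam_space ::
  "'a measure \<Rightarrow> ('a \<Rightarrow> 'b::euclidean_space) \<Rightarrow> ('a \<Rightarrow> real) \<Rightarrow> 'a set \<Rightarrow> 'b set" where
  "natparam_space M t k X =
     {\<theta>. (\<integral>\<^sup>+ x. ennreal (exp (t x \<bullet> \<theta> + k x) * indicator X x) \<partial>M) < \<infinity>}"

definition lognorm ::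
  "'a measure \<Rightarrow> ('a \<Rightarrow> 'b::euclidean_space) \<Rightarrow> ('a \<Rightarrow> real) \<Rightarrow> 'a set \<Rightarrow> 'b \<Rightarrow> real" where
  "lognorm M t k X \<theta> =
     ln (enn2real (\<integral>\<^sup>+ x. ennreal (exp (t x \<bullet> \<theta> + k x) * indicator X x) \<partial>M))"

definition expfam_density ::
  "'a measure \<Rightarrow> ('a \<Rightarrow> 'b::euclidean_space) \<Rightarrow> ('a \<Rightarrow> real) \<Rightarrow> 'a set \<Rightarrow> 'b \<Rightarrow> 'a \<Rightarrow> real" where
  "expfam_density M t k X \<theta> x =
     exp (t x \<bullet> \<theta> - lognorm M t k X \<theta> + k x) * indicator X x"

end

theory Submission
  imports Defs
begin

definition cc :: "(nat \<Rightarrow> real) \<Rightarrow> nat \<Rightarrow> nat \<Rightarrow> real" where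
  "cc a d i = (\<Sum>j=i..d. a j * real (j choose i))"

lemma poly_expand:
  "(\<Sum>j\<le>d. a j * (u::real)^j) = (\<Sum>i\<le>d. cc a d i * (u-1)^i)"
proof -
  have e: "u^j = (\<Sum>i\<le>d. real (j choose i) * (u-1)^i)" if "j \<le> d" for j
  proof -
    have "u^j = ((u-1)+1)^j" by simp
    also have "\<dots> = (\<Sum>i\<le>j. real (j choose i) * (u-1)^i)"
      unfolding binomial_ring by simp
    also have "\<dots> = (\<Sum>i\<le>d. real (j choose i) * (u-1)^i)"
      by (rule sum.mono_neutral_left) (use that in auto)
    finally show ?thesis .
  qed
  have "(\<Sum>j\<le>d. a j * u^j) = (\<Sum>j\<le>d. \<Sum>i\<le>d. a j * real (j choose i) * (u-1)^i)"
    by (rule sum.cong) (auto simp: e sum_distrib_left mult.assoc)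
  also have "\<dots> = (\<Sum>i\<le>d. \<Sum>j\<le>d. a j * real (j choose i) * (u-1)^i)"
    by (rule sum.swap)
  also have "\<dots> = (\<Sum>i\<le>d. cc a d i * (u-1)^i)"
  proof (rule sum.cong)
    fix i assume "i \<in> {..d}"
    have "(\<Sum>j\<le>d. a j * real (j choose i) * (u-1)^i) = (\<Sum>j\<le>d. a j * real (j choose i)) * (u-1)^i"
      by (simp add: sum_distrib_right)
    also have "(\<Sum>j\<le>d. a j * real (j choose i)) = cc a d i"
      unfolding cc_def by (rule sum.mono_neutral_right) auto
    finally show "(\<Sum>j\<le>d. a j * real (j choose i) * (u-1)^i) = cc a d i * (u-1)^i" .
  qed simp
  finally show ?thesis .
qed

lemma cc0: "cc a d 0 = (\<Sum>j\<le>d. a j)"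
  unfolding cc_def by (simp add: atLeast0AtMost)

lemma cc1: "cc a d 1 = (\<Sum>j\<le>d. a j * real j)"
  unfolding cc_def by simp (rule sum.mono_neutral_left, auto)

lemma deriv_poly: "deriv (\<lambda>u. \<Sum>j\<le>d. a j * (u::real) ^ j) 1 = (\<Sum>j\<le>d. a j * real j)"
proof -
  have "((\<lambda>u. \<Sum>j\<le>d. a j * (u::real) ^ j) has_field_derivative (\<Sum>j\<le>d. a j * (real j))) (at 1)"
    by (intro DERIV_sum DERIV_cmult) (rule DERIV_pow[where x=1, simplified])
  then show ?thesis by (simp add: DERIV_imp_deriv)
qed

lemma fdiv_expand:
  assumes f_def: "f = (\<lambda>u. \<Sum>j\<le>d. a j * u ^ j)" and "d \<ge> 2"
    and f1: "f 1 = 0" and df1: "deriv f 1 = 0"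
  shows "fdiv_integrand f p q x = (\<Sum>i=2..d. cc a d i * chi_integrand i p q x)"
proof -
  have c0: "cc a d 0 = 0" using f1 by (simp add: f_def cc0)
  have c1: "cc a d 1 = 0" using df1 cc1[of a d] by (simp add: f_def deriv_poly)
  show ?thesis
  proof (cases "p x > 0")
    case False then show ?thesis by (simp add: fdiv_integrand_def chi_integrand_def)
  next
    case True
    have "fdiv_integrand f p q x = p x * (\<Sum>i\<le>d. cc a d i * (q x / p x - 1)^i)"
      using True unfolding fdiv_integrand_def f_def by (subst poly_expand) simp
    also have "\<dots> = (\<Sum>i\<le>d. cc a d i * (p x * (q x / p x - 1)^i))"
      by (simp add: sum_distrib_left mult.left_commute)
    also have "\<dots> = (\<Sum>i\<in>{2..d}. cc a d i * (p x * (q x / p x - 1)^i))"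
    proof (rule sum.mono_neutral_right)
      show "\<forall>i\<in>{..d} - {2..d}. cc a d i * (p x * (q x / p x - 1)^i) = 0"
      proof
        fix i assume "i \<in> {..d} - {2..d}"
        then have "i = 0 \<or> i = 1" by auto
        then show "cc a d i * (p x * (q x / p x - 1)^i) = 0" using c0 c1 by auto
      qed
    qed auto
    also have "\<dots> = (\<Sum>i\<in>{2..d}. cc a d i * chi_integrand i p q x)"
    proof (rule sum.cong)
      fix i :: nat assume "i \<in> {2..d}"
      then obtain m where m: "i = Suc m" by (cases i) auto
      have "p x * (q x / p x - 1)^i = (q x - p x)^i / p x ^ (i - 1)"
        using True unfolding m by (simp add: power_divide field_simps)
      then show "cc a d i * (p x * (q x / p x - 1)^i) = cc a d i * chi_integrand i p q x"
        using True by (simp add: chi_integrand_def)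
    qed simp
    finally show ?thesis .
  qed
qed


lemma part1:
  assumes f_def: "f = (\<lambda>u. \<Sum>j\<le>d. a j * u ^ j)" and d2: "d \<ge> 2"
    and f1: "f 1 = 0" and df1: "deriv f 1 = 0"
    and int: "\<forall>i\<in>{2..d}. integrable M (chi_integrand i p q)"
  shows "integrable M (fdiv_integrand f p q) \<and> fdiv M f p q = (\<Sum>i=2..d. cc a d i * chi_pm M i p q)"
proof -
  have eq: "fdiv_integrand f p q = (\<lambda>x. \<Sum>i=2..d. cc a d i * chi_integrand i p q x)"
    by (rule ext, rule fdiv_expand[OF f_def d2 f1 df1])
  show ?thesis unfolding eq fdiv_def chi_pm_def
  proof
    show "integrable M (\<lambda>x. \<Sum>i = 2..d. cc a d i * chi_integrand i p q x)"
      using int by (intro Bochner_Integration.integrable_sum integrable_mult_right) auto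
    have "(LINT x|M. (\<Sum>i = 2..d. cc a d i * chi_integrand i p q x)) =
       (\<Sum>i = 2..d. (LINT x|M. cc a d i * chi_integrand i p q x))"
      using int by (intro Bochner_Integration.integral_sum integrable_mult_right) auto
    then show "(LINT x|M. (\<Sum>i = 2..d. cc a d i * chi_integrand i p q x)) =
       (\<Sum>i = 2..d. cc a d i * integral\<^sup>L M (chi_integrand i p q))" by simp
  qed
qed

lemma altsum: "i \<ge> 1 \<Longrightarrow> (\<Sum>s=0..i. (-1::real) ^ (i - s) * real (i choose s)) = 0"
proof -
  assume "i \<ge> 1"
  have "(0::real) = (1 + (-1))^i" using \<open>i \<ge> 1\<close> by simp
  also have "\<dots> = (\<Sum>s\<le>i. real (i choose s) * 1^s * (-1)^(i-s))" by (rule binomial_ring)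
  finally show ?thesis by (simp add: atLeast0AtMost mult.commute)
qed

lemma binom_exp:
  fixes A B :: real assumes "i \<ge> 1"
  shows "(exp B - exp A)^i / exp A ^ (i-1) =
    (\<Sum>s=0..i. (-1)^(i-s) * real (i choose s) * exp (real s * B + (1 - real s) * A))"
proof -
  have "(exp B - exp A)^i = (exp B + (- exp A))^i" by simp
  also have "\<dots> = (\<Sum>s\<le>i. real (i choose s) * exp B ^ s * (- exp A) ^ (i - s))"
    by (rule binomial_ring)
  finally have "(exp B - exp A)^i / exp A ^ (i-1) =
      (\<Sum>s\<le>i. real (i choose s) * exp B ^ s * (- exp A) ^ (i - s) / exp A ^ (i-1))"
    by (simp add: sum_divide_distrib)
  also have "\<dots> = (\<Sum>s=0..i. (-1)^(i-s) * real (i choose s) * exp (real s * B + (1 - real s) * A))"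
    unfolding atLeast0AtMost
  proof (rule sum.cong)
    fix s assume "s \<in> {..i}"
    then have si: "s \<le> i" by simp
    have "real (i - s) * A - real (i - 1) * A = (1 - real s) * A"
      using si assms by (simp add: of_nat_diff algebra_simps)
    then have "exp B ^ s * exp A ^ (i - s) / exp A ^ (i-1) = exp (real s * B + (1 - real s) * A)"
      by (simp add: exp_of_nat_mult[symmetric] exp_add[symmetric] exp_diff[symmetric])
    then show "real (i choose s) * exp B ^ s * (- exp A) ^ (i - s) / exp A ^ (i-1) =
      (-1)^(i-s) * real (i choose s) * exp (real s * B + (1 - real s) * A)"
      by (simp add: power_minus[of "exp A"] field_simps)
  qed simp
  finally show ?thesis .
qed


lemma part2:
  fixes t :: "'a \<Rightarrow> 'b::euclidean_space"
  assumes tm: "t \<in> borel_measurable M" and km: "k \<in> borel_measurable M" and Xm: "X \<in> sets M"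
    and aff: "affine (natparam_space M t k X)"
    and tp: "\<theta>p \<in> natparam_space M t k X" and tq: "\<theta>q \<in> natparam_space M t k X"
    and i1: "i \<ge> 1"
    and p_def: "p = expfam_density M t k X \<theta>p" and q_def: "q = expfam_density M t k X \<theta>q"
    and F_def: "F = lognorm M t k X"
  shows "chi_finite M i p q \<and> chi_pm M i p q =
     (\<Sum>s=0..i. (-1) ^ (i - s) * real (i choose s) *
                  exp (F ((1 - real s) *\<^sub>R \<theta>p + real s *\<^sub>R \<theta>q)
                       - ((1 - real s) * F \<theta>p + real s * F \<theta>q)))"
proof -
  define N where "N = natparam_space M t k X"
  define G where "G \<theta> x = exp (t x \<bullet> \<theta> + k x) * indicator X x" for \<theta> x
  define th where "th s = (1 - real s) *\<^sub>R \<theta>p + real s *\<^sub>R \<theta>q" for s :: nat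
  define cf where "cf s = (-1) ^ (i - s) * real (i choose s) * exp (- ((1 - real s) * F \<theta>p + real s * F \<theta>q))" for s :: nat
  note [measurable] = tm km Xm
  have Gm[measurable]: "G \<theta> \<in> borel_measurable M" for \<theta>
    unfolding G_def by measurable
  have Gnn: "G \<theta> x \<ge> 0" for \<theta> x unfolding G_def by simp
  have thN: "th s \<in> N" for s
    using aff tp tq unfolding N_def th_def affine_def by auto
  have Gint: "integrable M (G \<theta>)" if "\<theta> \<in> N" for \<theta>
  proof (rule integrableI_nonneg)
    show "(\<integral>\<^sup>+ x. ennreal (G \<theta> x) \<partial>M) < \<infinity>"
      using that unfolding N_def natparam_space_def G_def by simp
  qed (auto simp: Gnn)
  have Fint: "F \<theta> = ln (integral\<^sup>L M (G \<theta>))" if "\<theta> \<in> N" for \<theta>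
  proof -
    have "(\<integral>\<^sup>+ x. ennreal (G \<theta> x) \<partial>M) = ennreal (integral\<^sup>L M (G \<theta>))"
      by (rule nn_integral_eq_integral[OF Gint[OF that]]) (simp add: Gnn)
    moreover have "integral\<^sup>L M (G \<theta>) \<ge> 0" by (simp add: Gnn)
    ultimately show ?thesis unfolding F_def lognorm_def G_def by simp
  qed
  have pX: "p x = (if x \<in> X then exp (t x \<bullet> \<theta>p - F \<theta>p + k x) else 0)" for x
    unfolding p_def F_def expfam_density_def by simp
  have qX: "q x = (if x \<in> X then exp (t x \<bullet> \<theta>q - F \<theta>q + k x) else 0)" for x
    unfolding q_def F_def expfam_density_def by simp
  have pw: "chi_integrand i p q x = (\<Sum>s=0..i. cf s * G (th s) x)" for x
  proof (cases "x \<in> X")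
    case False then show ?thesis by (simp add: chi_integrand_def pX G_def)
  next
    case True
    let ?A = "t x \<bullet> \<theta>p - F \<theta>p + k x" and ?B = "t x \<bullet> \<theta>q - F \<theta>q + k x"
    have "chi_integrand i p q x = (exp ?B - exp ?A)^i / exp ?A ^ (i-1)"
      using True by (simp add: chi_integrand_def pX qX)
    also have "\<dots> = (\<Sum>s=0..i. (-1)^(i-s) * real (i choose s) * exp (real s * ?B + (1 - real s) * ?A))"
      by (rule binom_exp[OF i1])
    also have "\<dots> = (\<Sum>s=0..i. cf s * G (th s) x)"
    proof (rule sum.cong)
      fix s assume "s \<in> {0..i}"
      have "real s * ?B + (1 - real s) * ?A = (t x \<bullet> th s + k x) + (- ((1 - real s) * F \<theta>p + real s * F \<theta>q))"
        unfolding th_def by (simp add: inner_add_right algebra_simps)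
      then show "(-1)^(i-s) * real (i choose s) * exp (real s * ?B + (1 - real s) * ?A) = cf s * G (th s) x"
        using True unfolding cf_def G_def by (simp add: exp_add)
    qed simp
    finally show ?thesis .
  qed
  have chi_eq: "chi_integrand i p q = (\<lambda>x. \<Sum>s=0..i. cf s * G (th s) x)"
    using pw by (intro ext) simp
  have int: "integrable M (chi_integrand i p q)"
    unfolding chi_eq using Gint thN
    by (intro Bochner_Integration.integrable_sum integrable_mult_right) auto
  have ae: "AE x in M. p x = 0 \<longrightarrow> q x = 0"
    by (intro AE_I2) (simp add: pX qX)
  have val: "chi_pm M i p q = (\<Sum>s=0..i. cf s * integral\<^sup>L M (G (th s)))"
    unfolding chi_pm_def chi_eq using Gint thN
    by (subst Bochner_Integration.integral_sum) (auto intro!: integrable_mult_right)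
  show ?thesis
  proof (intro conjI)
    show "chi_finite M i p q" unfolding chi_finite_def using int ae by simp
    show "chi_pm M i p q =
     (\<Sum>s=0..i. (-1) ^ (i - s) * real (i choose s) *
                  exp (F ((1 - real s) *\<^sub>R \<theta>p + real s *\<^sub>R \<theta>q)
                       - ((1 - real s) * F \<theta>p + real s * F \<theta>q)))"
    proof (cases "AE x in M. x \<notin> X")
      case True
      have z: "integral\<^sup>L M (G \<theta>) = 0" for \<theta>
        using True by (intro integral_eq_zero_AE) (auto simp: G_def elim: AE_mp)
      have Fc: "F \<theta> = ln 0" if "\<theta> \<in> N" for \<theta> using Fint[OF that] z by simp
      have "N \<noteq> {}" using tp unfolding N_def by auto
      have F1: "F (th s) = F \<theta>p" "F \<theta>q = F \<theta>p" for s
        using Fc thN tp tq unfolding N_def by auto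
      have "(\<Sum>s=0..i. (-1) ^ (i - s) * real (i choose s) *
                  exp (F ((1 - real s) *\<^sub>R \<theta>p + real s *\<^sub>R \<theta>q)
                       - ((1 - real s) * F \<theta>p + real s * F \<theta>q)))
         = (\<Sum>s=0..i. (-1) ^ (i - s) * real (i choose s))"
      proof (rule sum.cong)
        fix s assume "s \<in> {0..i}"
        have "F ((1 - real s) *\<^sub>R \<theta>p + real s *\<^sub>R \<theta>q) - ((1 - real s) * F \<theta>p + real s * F \<theta>q) = 0"
          using F1(1)[of s] F1(2) unfolding th_def by (simp add: algebra_simps)
        then show "(-1) ^ (i - s) * real (i choose s) *
                  exp (F ((1 - real s) *\<^sub>R \<theta>p + real s *\<^sub>R \<theta>q)
                       - ((1 - real s) * F \<theta>p + real s * F \<theta>q)) = (-1) ^ (i - s) * real (i choose s)"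
          by simp
      qed simp
      also have "\<dots> = 0" by (rule altsum[OF i1])
      finally show ?thesis using val z by simp
    next
      case False
      have pos: "integral\<^sup>L M (G \<theta>) > 0" if "\<theta> \<in> N" for \<theta>
      proof (rule ccontr)
        assume "\<not> integral\<^sup>L M (G \<theta>) > 0"
        moreover have "integral\<^sup>L M (G \<theta>) \<ge> 0" by (simp add: Gnn)
        ultimately have "integral\<^sup>L M (G \<theta>) = 0" by linarith
        then have "(\<integral>\<^sup>+ x. ennreal (G \<theta> x) \<partial>M) = 0"
          using nn_integral_eq_integral[OF Gint[OF that]] Gnn by simp
        then have "AE x in M. ennreal (G \<theta> x) = 0"
          by (subst (asm) nn_integral_0_iff_AE) auto
        then have "AE x in M. x \<notin> X"
          by (rule AE_mp) (auto simp: G_def)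
        with False show False by simp
      qed
      have "chi_pm M i p q = (\<Sum>s=0..i. cf s * exp (F (th s)))"
        unfolding val
      proof (rule sum.cong)
        fix s
        have "exp (F (th s)) = integral\<^sup>L M (G (th s))"
          using Fint[OF thN[of s]] pos[OF thN[of s]] by simp
        then show "cf s * integral\<^sup>L M (G (th s)) = cf s * exp (F (th s))" by simp
      qed simp
      also have "\<dots> = (\<Sum>s=0..i. (-1) ^ (i - s) * real (i choose s) *
                  exp (F (th s) - ((1 - real s) * F \<theta>p + real s * F \<theta>q)))"
      proof (rule sum.cong)
        fix s
        have "exp (F (th s) - ((1 - real s) * F \<theta>p + real s * F \<theta>q)) =
              exp (- ((1 - real s) * F \<theta>p + real s * F \<theta>q)) * exp (F (th s))"
          by (simp add: exp_add[symmetric])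
        then show "cf s * exp (F (th s)) = (-1) ^ (i - s) * real (i choose s) *
                  exp (F (th s) - ((1 - real s) * F \<theta>p + real s * F \<theta>q))"
          unfolding cf_def by (simp only: mult.assoc)
      qed simp
      also have "\<dots> = (\<Sum>s=0..i. (-1) ^ (i - s) * real (i choose s) *
                  exp (F ((1 - real s) *\<^sub>R \<theta>p + real s *\<^sub>R \<theta>q)
                       - ((1 - real s) * F \<theta>p + real s * F \<theta>q)))"
        unfolding th_def ..
      finally show ?thesis .
    qed
  qed
qed


theorem theorem2:
  fixes M :: "'a measure" and a :: "nat \<Rightarrow> real" and d :: nat and f :: "real \<Rightarrow> real"
  assumes sf: "sigma_finite_measure M"
    and f_def: "f = (\<lambda>u. \<Sum>j\<le>d. a j * u ^ j)"
    and deg: "d \<ge> 2" "a d \<noteq> 0"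
    and conv: "convex_on {0<..} f"
    and strict1: "deriv (deriv f) 1 > 0"
    and f1: "f 1 = 0"
    and df1: "deriv f 1 = 0"
  shows
    "(\<forall>p q. is_density M p \<and> is_density M q \<and> (\<forall>i\<in>{2..d}. chi_finite M i p q) \<longrightarrow>
        integrable M (fdiv_integrand f p q) \<and>
        fdiv M f p q = (\<Sum>i=2..d. (\<Sum>j=i..d. a j * real (j choose i)) * chi_pm M i p q))
   \<and> (\<forall>(t :: 'a \<Rightarrow> 'b::euclidean_space) k X \<theta>p \<theta>q.
        t \<in> borel_measurable M \<and> k \<in> borel_measurable M \<and> X \<in> sets M
        \<and> affine (natparam_space M t k X)
        \<and> \<theta>p \<in> natparam_space M t k X \<and> \<theta>q \<in> natparam_space M t k X \<longrightarrow>
        (let p = expfam_density M t k X \<theta>p; q = expfam_density M t k X \<theta>q;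
             F = lognorm M t k X in
          (\<forall>i\<in>{2..d}. chi_finite M i p q) \<and>
          integrable M (fdiv_integrand f p q) \<and>
          fdiv M f p q =
            (\<Sum>i=2..d. (\<Sum>j=i..d. a j * real (j choose i)) *
               (\<Sum>s=0..i. (-1) ^ (i - s) * real (i choose s) *
                  exp (F ((1 - real s) *\<^sub>R \<theta>p + real s *\<^sub>R \<theta>q)
                       - ((1 - real s) * F \<theta>p + real s * F \<theta>q))))))"
proof (rule conjI, goal_cases)
  case 1
  show ?case
  proof (intro allI impI)
  fix p q
  assume h: "is_density M p \<and> is_density M q \<and> (\<forall>i\<in>{2..d}. chi_finite M i p q)"
  then have "\<forall>i\<in>{2..d}. integrable M (chi_integrand i p q)" by (simp add: chi_finite_def)
  from part1[OF f_def deg(1) f1 df1 this]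
  show "integrable M (fdiv_integrand f p q) \<and>
        fdiv M f p q = (\<Sum>i=2..d. (\<Sum>j=i..d. a j * real (j choose i)) * chi_pm M i p q)"
    by (simp add: cc_def)
  qed
next
  case 2
  show ?case
  proof (intro allI impI)
  fix t :: "'a \<Rightarrow> 'b::euclidean_space" and k X \<theta>p \<theta>q
  assume h: "t \<in> borel_measurable M \<and> k \<in> borel_measurable M \<and> X \<in> sets M
        \<and> affine (natparam_space M t k X)
        \<and> \<theta>p \<in> natparam_space M t k X \<and> \<theta>q \<in> natparam_space M t k X"
  define p where "p = expfam_density M t k X \<theta>p"
  define q where "q = expfam_density M t k X \<theta>q"
  define F where "F = lognorm M t k X"
  have P2: "chi_finite M i p q \<and> chi_pm M i p q =
     (\<Sum>s=0..i. (-1) ^ (i - s) * real (i choose s) *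
                  exp (F ((1 - real s) *\<^sub>R \<theta>p + real s *\<^sub>R \<theta>q)
                       - ((1 - real s) * F \<theta>p + real s * F \<theta>q)))" if "i \<in> {2..d}" for i
    using h that by (intro part2[where t=t and k=k and X=X]) (auto simp: p_def q_def F_def)
  have cf: "\<forall>i\<in>{2..d}. chi_finite M i p q" using P2 by blast
  then have "\<forall>i\<in>{2..d}. integrable M (chi_integrand i p q)" by (simp add: chi_finite_def)
  note R = part1[OF f_def deg(1) f1 df1 this]
  have "fdiv M f p q = (\<Sum>i=2..d. (\<Sum>j=i..d. a j * real (j choose i)) *
               (\<Sum>s=0..i. (-1) ^ (i - s) * real (i choose s) *
                  exp (F ((1 - real s) *\<^sub>R \<theta>p + real s *\<^sub>R \<theta>q)
                       - ((1 - real s) * F \<theta>p + real s * F \<theta>q))))"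
    using R P2 unfolding cc_def by (intro trans[OF conjunct2[OF R]] sum.cong) (auto simp: cc_def)
  then show "let p = expfam_density M t k X \<theta>p; q = expfam_density M t k X \<theta>q;
             F = lognorm M t k X in
          (\<forall>i\<in>{2..d}. chi_finite M i p q) \<and>
          integrable M (fdiv_integrand f p q) \<and>
          fdiv M f p q =
            (\<Sum>i=2..d. (\<Sum>j=i..d. a j * real (j choose i)) *
               (\<Sum>s=0..i. (-1) ^ (i - s) * real (i choose s) *
                  exp (F ((1 - real s) *\<^sub>R \<theta>p + real s *\<^sub>R \<theta>q)
                       - ((1 - real s) * F \<theta>p + real s * F \<theta>q))))"
    using cf R unfolding Let_def p_def[symmetric] q_def[symmetric] F_def[symmetric] by simp
qed
qed

end
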